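(* For every integer $k \ge 1$, with $\theta = 2\pi/(4k+4)$, the $\theta_{4k+4}$-graph on any finite point set in general position is a $\left(1 + \dfrac{2\sin(\theta/2)}{\cos(\theta/2) - \sin(\theta/2)}\right)$-spanner.
   Context: Cones: for $m \ge 2$, $\theta = 2\pi/m$; around each point $u$ draw $m$ rays with consecutive angular separation $\theta$, oriented so the vertical upward ray from $u$ bisects a cone $C_0^u$; cones numbered clockwise, same orientation at every point. General position: no two points on a line parallel to a cone boundary ray, no two on a line perpendicular to a cone bisector, no three collinear. The $\theta_m$-graph on $P$: for each $u\in P$ and each cone $C_i^u$ containing another point of $P$, add an edge from $u$ to the point of $C_i^u$ whose orthogonal projection onto the bisector of $C_i^u$ is closest to $u$; edges weighted by Euclidean length. A graph $H$ on $P$ is a $t$-spanner if $\delta_H(u,w)\le t|uw|$ for all $u,w\in P$. *)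

theory Defs
  imports Complex_Main
begin

text \<open>Points of the plane are complex numbers; Euclidean length is cmod. Cone i (0 <= i < m) at u has bisector direction
  angle pi/2 - i*theta (cone 0 bisected by the upward vertical ray, numbering
  clockwise) and consists of the points v \<noteq> u whose direction from u has angle in
  the half-open interval [pi/2 - i*theta - theta/2, pi/2 - i*theta + theta/2).\<close>

definition cone_angle :: "nat \<Rightarrow> real" where
  "cone_angle m = 2 * pi / real m"

definition bisector_dir :: "nat \<Rightarrow> nat \<Rightarrow> real" where
  "bisector_dir m i = pi / 2 - real i * cone_angle m"

definition in_cone :: "nat \<Rightarrow> nat \<Rightarrow> complex \<Rightarrow> complex \<Rightarrow> bool" where
  "in_cone m i u v \<longleftrightarrow> v \<noteq> u \<and>
     (\<exists>\<phi>. bisector_dir m i - cone_angle m / 2 \<le> \<phi> \<and>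
          \<phi> < bisector_dir m i + cone_angle m / 2 \<and>
          v - u = complex_of_real (cmod (v - u)) * cis \<phi>)"

definition bisector_proj :: "nat \<Rightarrow> nat \<Rightarrow> complex \<Rightarrow> complex \<Rightarrow> real" where
  "bisector_proj m i u v = Re ((v - u) * cnj (cis (bisector_dir m i)))"

definition theta_edge :: "nat \<Rightarrow> complex set \<Rightarrow> complex \<Rightarrow> complex \<Rightarrow> bool" where
  "theta_edge m P u w \<longleftrightarrow> u \<in> P \<and> w \<in> P \<and>
     (\<exists>i<m. in_cone m i u w \<and>
        (\<forall>v\<in>P. in_cone m i u v \<longrightarrow> bisector_proj m i u w \<le> bisector_proj m i u v))"

definition general_position :: "nat \<Rightarrow> complex set \<Rightarrow> bool" where
  "general_position m P \<longleftrightarrow>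
     (\<forall>a\<in>P. \<forall>b\<in>P. a \<noteq> b \<longrightarrow>
        (\<forall>i<m. Im ((b - a) * cnj (cis (bisector_dir m i + cone_angle m / 2))) \<noteq> 0) \<and>
        (\<forall>i<m. Re ((b - a) * cnj (cis (bisector_dir m i))) \<noteq> 0)) \<and>
     (\<forall>a\<in>P. \<forall>b\<in>P. \<forall>c\<in>P. a \<noteq> b \<and> a \<noteq> c \<and> b \<noteq> c \<longrightarrow>
        Im ((b - a) * cnj (c - a)) \<noteq> 0)"

fun path_length :: "complex list \<Rightarrow> real" where
  "path_length (x # y # ys) = cmod (y - x) + path_length (y # ys)"
| "path_length _ = 0"

definition is_path :: "(complex \<Rightarrow> complex \<Rightarrow> bool) \<Rightarrow> complex list \<Rightarrow> complex \<Rightarrow> complex \<Rightarrow> bool" where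
  "is_path E ps u w \<longleftrightarrow> ps \<noteq> [] \<and> hd ps = u \<and> last ps = w \<and>
     (\<forall>j. Suc j < length ps \<longrightarrow> E (ps ! j) (ps ! Suc j) \<or> E (ps ! Suc j) (ps ! j))"

text \<open>t-spanner: delta_H(u,w) \<le> t |uw|, i.e. some path (hence the shortest one, the
  graph being finite) from u to w has length at most t |uw|.\<close>
definition is_spanner :: "complex set \<Rightarrow> (complex \<Rightarrow> complex \<Rightarrow> bool) \<Rightarrow> real \<Rightarrow> bool" where
  "is_spanner P E t \<longleftrightarrow>
     (\<forall>u\<in>P. \<forall>w\<in>P. \<exists>ps. is_path E ps u w \<and> path_length ps \<le> t * cmod (w - u))"

end

theory Submission
  imports Defs
begin


lemma cos_sin_sqrt2: "cos y + sin y = sqrt 2 * cos (y - pi/4)"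
  by (simp add: cos_diff cos_45 sin_45 algebra_simps)

lemma mono_g:
  assumes "0 \<le> a" "a \<le> x" "x \<le> pi/2 - a"
  shows "cos a + sin a \<le> cos x + sin x"
proof -
  have "cos (\<bar>x - pi/4\<bar>) \<ge> cos (\<bar>a - pi/4\<bar>)"
    using assms by (intro cos_monotone_0_pi_le) (auto simp: abs_if)
  then have "cos (x - pi/4) \<ge> cos (a - pi/4)" by simp
  then show ?thesis unfolding cos_sin_sqrt2 by simp
qed

lemma core:
  fixes a x th :: real and n :: int and k :: nat
  assumes th: "0 < th" "th * (real k + 1) = pi/2"
    and x: "0 \<le> x" "x \<le> pi/2" and a: "\<bar>a\<bar> \<le> th/2" and n: "x - a = of_int n * th"
  shows "cos a + \<bar>sin a\<bar> \<le> cos x + \<bar>sin x\<bar>"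
proof -
  have "of_int n * th \<ge> -th/2" using n x a by auto
  hence "(-1) * th < of_int n * th" using th by linarith
  hence "of_int n > (-1::real)" using th by (simp only: mult_less_cancel_right)
  hence n0: "n \<ge> 0" by simp
  have "of_int n * th \<le> th * (real k + 1) + th/2" using n x a th by auto
  hence "of_int n * th < (real k + 2) * th" using th by (simp add: algebra_simps)
  hence "of_int n < real k + 2" using th by simp
  hence n1: "n \<le> int k + 1" by linarith
  have b1: "\<bar>a\<bar> \<le> x"
  proof (cases "n = 0")
    case True thus ?thesis using n x by auto
  next
    case False hence "of_int n \<ge> (1::real)" using n0 by simp
    hence "of_int n * th \<ge> th" using th by simp
    thus ?thesis using n a by auto
  qed
  have b2: "x \<le> pi/2 - \<bar>a\<bar>"
  proof (cases "n = int k + 1")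
    case True
    hence "x - a = pi/2" using n th by (simp add: algebra_simps)
    thus ?thesis using x by auto
  next
    case False hence "of_int n \<le> real k" using n1 by simp
    hence "of_int n * th \<le> real k * th" using th by (simp add: mult_right_mono)
    moreover have "real k * th + th = pi/2" using th(2) by (simp add: algebra_simps)
    moreover have "a + \<bar>a\<bar> \<le> th" using a by linarith
    ultimately show ?thesis using n by linarith
  qed
  have "cos \<bar>a\<bar> + sin \<bar>a\<bar> \<le> cos x + sin x" using mono_g[OF _ b1 b2] by simp
  moreover have "sin \<bar>a\<bar> = \<bar>sin a\<bar>"
  proof -
    have "th * 1 \<le> th * (real k + 1)" using th(1) by (intro mult_left_mono) auto
    hence "th \<le> pi/2" using th(2) by simp
    hence "\<bar>a\<bar> \<le> pi" using a by linarith
    hence "sin \<bar>a\<bar> \<ge> 0" by (intro sin_ge_zero) auto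
    thus ?thesis by (cases "a \<ge> 0") auto
  qed
  moreover have "sin x \<ge> 0" using x by (intro sin_ge_zero) auto
  ultimately show ?thesis by simp
qed

lemma keyreal:
  fixes a y th :: real and n :: int and k :: nat
  assumes th: "0 < th" "th * (real k + 1) = pi/2"
    and a: "\<bar>a\<bar> \<le> th/2" and n: "y - a = of_int n * th" and cy: "cos y \<ge> 0"
  shows "cos a + \<bar>sin a\<bar> \<le> cos y + \<bar>sin y\<bar>"
proof -
  define l where "l = \<lfloor>(y + pi/2) / (2*pi)\<rfloor>"
  define y1 where "y1 = y - (2*pi) * of_int l"
  have "of_int l \<le> (y + pi/2) / (2*pi)" "(y + pi/2) / (2*pi) < of_int l + 1"
    unfolding l_def by linarith+
  hence "of_int l * (2*pi) \<le> y + pi/2" "y + pi/2 < (of_int l + 1) * (2*pi)"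
    by (simp_all add: field_simps)
  hence y1b: "-pi/2 \<le> y1" "y1 < 3*pi/2" unfolding y1_def by (simp_all add: algebra_simps)
  have cs: "cos y1 = cos y" "sin y1 = sin y" unfolding y1_def
    by (simp_all add: cos_diff sin_diff)
  have y1u: "y1 \<le> pi/2"
  proof (rule ccontr)
    assume "\<not> y1 \<le> pi/2"
    hence "cos (y1 - pi) > 0" using y1b by (intro cos_gt_zero_pi) auto
    moreover have "cos (y1 - pi) = - cos y1" by (simp add: cos_diff)
    ultimately show False using cy cs by simp
  qed
  have tw: "2 * pi = th * (4 * real k + 4)" using th(2) by (simp add: algebra_simps)
  define n' where "n' = n - (4 * int k + 4) * l"
  have n': "y1 - a = of_int n' * th" unfolding n'_def y1_def using n tw
    by (simp add: algebra_simps)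
  show ?thesis
  proof (cases "y1 \<ge> 0")
    case True
    from core[OF th True y1u a n'] cs show ?thesis by simp
  next
    case False
    have "- y1 - (- a) = of_int (- n') * th" using n' by simp
    from core[OF th _ _ _ this] False y1b a cs show ?thesis by simp
  qed
qed



definition rot :: "nat \<Rightarrow> nat \<Rightarrow> complex \<Rightarrow> complex" where
  "rot m i z = z * cnj (cis (bisector_dir m i))"

definition Nf :: "complex \<Rightarrow> real" where "Nf z = Re z + \<bar>Im z\<bar>"

lemma rot_polar: "rot m i (complex_of_real r * cis p) = complex_of_real r * cis (p - bisector_dir m i)"
  unfolding rot_def by (simp add: cis_cnj mult.assoc cis_mult)

lemma cmod_rot[simp]: "cmod (rot m i z) = cmod z"
  unfolding rot_def by (simp add: norm_mult)

lemma Nf_polar: "r \<ge> 0 \<Longrightarrow> Nf (complex_of_real r * cis p) = r * (cos p + \<bar>sin p\<bar>)"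
  unfolding Nf_def by (simp add: abs_mult algebra_simps)

lemma in_cone_polar:
  assumes "in_cone m i u v"
  shows "\<exists>a. \<bar>a\<bar> \<le> cone_angle m / 2 \<and> rot m i (v - u) = complex_of_real (cmod (v - u)) * cis a"
proof -
  from assms obtain p where p: "bisector_dir m i - cone_angle m / 2 \<le> p"
     "p < bisector_dir m i + cone_angle m / 2" "v - u = complex_of_real (cmod (v - u)) * cis p"
    unfolding in_cone_def by blast
  show ?thesis
  proof (intro exI conjI)
    show "\<bar>p - bisector_dir m i\<bar> \<le> cone_angle m / 2" using p(1,2) unfolding abs_le_iff by linarith
    show "rot m i (v - u) = complex_of_real (cmod (v - u)) * cis (p - bisector_dir m i)"
      by (subst p(3)) (simp add: rot_polar)
  qed
qed

lemma key_geom: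
  assumes m: "m = 4 * k + 4" and c: "in_cone m j v w" and re: "Re (rot m i (w - v)) \<ge> 0"
  shows "Nf (rot m j (w - v)) \<le> Nf (rot m i (w - v))"
proof -
  let ?th = "cone_angle m"
  from c obtain p where p: "bisector_dir m j - ?th / 2 \<le> p"
     "p < bisector_dir m j + ?th / 2" "w - v = complex_of_real (cmod (w - v)) * cis p"
     and ne: "w \<noteq> v"
    unfolding in_cone_def by blast
  define r where "r = cmod (w - v)"
  have r: "r > 0" using ne unfolding r_def by simp
  have th: "0 < ?th" "?th * (real k + 1) = pi / 2" using m
    by (auto simp: cone_angle_def field_simps)
  have e1: "rot m j (w - v) = complex_of_real r * cis (p - bisector_dir m j)"
    by (subst p(3)) (simp add: rot_polar r_def)
  have e2: "rot m i (w - v) = complex_of_real r * cis (p - bisector_dir m i)"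
    by (subst p(3)) (simp add: rot_polar r_def)
  have "r * cos (p - bisector_dir m i) \<ge> 0" using re e2 by simp
  hence cy: "cos (p - bisector_dir m i) \<ge> 0" using r by (simp add: zero_le_mult_iff)
  have a: "\<bar>p - bisector_dir m j\<bar> \<le> ?th / 2" using p(1,2) unfolding abs_le_iff by linarith
  have n: "(p - bisector_dir m i) - (p - bisector_dir m j) = of_int (int i - int j) * ?th"
    by (simp add: bisector_dir_def algebra_simps)
  have "cos (p - bisector_dir m j) + \<bar>sin (p - bisector_dir m j)\<bar>
        \<le> cos (p - bisector_dir m i) + \<bar>sin (p - bisector_dir m i)\<bar>"
    by (rule keyreal[OF th a n cy])
  thus ?thesis unfolding e1 e2 using r by (simp add: Nf_polar mult_left_mono)
qed

lemma cone_facts: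
  assumes c: "in_cone m i u v" and thb: "0 < cone_angle m" "cone_angle m \<le> pi / 2"
  shows "Re (rot m i (v - u)) \<ge> cmod (v - u) * cos (cone_angle m / 2)"
    "\<bar>Im (rot m i (v - u))\<bar> \<le> cmod (v - u) * sin (cone_angle m / 2)"
    "Nf (rot m i (v - u)) \<le> cmod (v - u) * (cos (cone_angle m / 2) + sin (cone_angle m / 2))"
proof -
  let ?h = "cone_angle m / 2"
  obtain a where a: "\<bar>a\<bar> \<le> ?h" and e: "rot m i (v - u) = complex_of_real (cmod (v - u)) * cis a"
    using in_cone_polar[OF c] by blast
  have "cos ?h \<le> cos \<bar>a\<bar>" using a thb by (intro cos_monotone_0_pi_le) auto
  hence ca: "cos ?h \<le> cos a" by simp
  have sa: "\<bar>sin a\<bar> = sin \<bar>a\<bar>"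
  proof -
    have "sin \<bar>a\<bar> \<ge> 0" using a thb by (intro sin_ge_zero) auto
    thus ?thesis by (cases "a \<ge> 0") auto
  qed
  have "sin \<bar>a\<bar> \<le> sin ?h" using a thb by (intro sin_monotone_2pi_le) auto
  hence sb: "\<bar>sin a\<bar> \<le> sin ?h" using sa by simp
  have "cos \<bar>a\<bar> + sin \<bar>a\<bar> \<le> cos ?h + sin ?h" using a thb by (intro mono_g) auto
  hence g: "cos a + \<bar>sin a\<bar> \<le> cos ?h + sin ?h" using sa by simp
  show "Re (rot m i (v - u)) \<ge> cmod (v - u) * cos ?h" unfolding e using ca
    by (simp add: mult_left_mono)
  show "\<bar>Im (rot m i (v - u))\<bar> \<le> cmod (v - u) * sin ?h" unfolding e using sb
    by (simp add: abs_mult mult_left_mono)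
  show "Nf (rot m i (v - u)) \<le> cmod (v - u) * (cos ?h + sin ?h)" unfolding e using g
    by (simp add: Nf_polar mult_left_mono)
qed



lemma cone_exists:
  assumes m: "m > 0" and ne: "w \<noteq> u"
  shows "\<exists>i<m. in_cone m i u w"
proof -
  let ?th = "cone_angle m"
  have th: "?th > 0" using m by (simp add: cone_angle_def)
  have tw: "2 * pi = real m * ?th" using m by (simp add: cone_angle_def)
  define p0 where "p0 = Arg (w - u)"
  have e0: "w - u = complex_of_real (cmod (w - u)) * cis p0"
    using rcis_cmod_Arg[of "w - u"] unfolding p0_def rcis_def by simp
  define a0 where "a0 = pi/2 + ?th/2"
  define q where "q = \<lceil>(a0 - p0) / ?th\<rceil> - 1"
  have q1: "of_int q < (a0 - p0) / ?th" "(a0 - p0) / ?th \<le> of_int q + 1"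
    unfolding q_def by linarith+
  hence q2: "of_int q * ?th < a0 - p0" "a0 - p0 \<le> (of_int q + 1) * ?th"
    using th by (simp_all add: field_simps)
  define i where "i = nat (q mod int m)"
  define d where "d = q div int m"
  have qi: "q = int i + int m * d" unfolding i_def d_def using m by simp
  have im: "i < m" unfolding i_def using m
    by (simp add: nat_less_iff)
  define p where "p = p0 + 2 * pi * of_int d"
  have cp: "cis p = cis p0"
  proof -
    have "cis (2 * pi * of_int d) = 1" by simp
    moreover have "cis p = cis p0 * cis (2 * pi * of_int d)" unfolding p_def by (simp only: cis_mult)
    ultimately show ?thesis by simp
  qed
  have "a0 - p = a0 - p0 - real m * of_int d * ?th" unfolding p_def using tw
    by (simp add: algebra_simps)
  moreover have "of_int q = real i + real m * of_int d" using qi by simp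
  ultimately have "real i * ?th < a0 - p" "a0 - p \<le> (real i + 1) * ?th" using q2
    by (simp_all add: algebra_simps)
  hence "bisector_dir m i - ?th / 2 \<le> p" "p < bisector_dir m i + ?th / 2"
    unfolding bisector_dir_def a0_def by (simp_all add: algebra_simps)
  hence "in_cone m i u w" unfolding in_cone_def using ne e0 cp by auto
  thus ?thesis using im by blast
qed

lemma dist_ineq:
  fixes a b x y c s :: real
  assumes "0 < b" "b \<le> a" "\<bar>x\<bar> * c \<le> a * s" "\<bar>y\<bar> * c \<le> b * s" "c > 0" "s \<ge> 0" "c^2 > 3 * s^2"
  shows "(a - b)^2 + (x - y)^2 < a^2 + x^2"
proof -
  have a0: "a > 0" using assms by linarith
  have h1: "c^2 * (2*a*b - b^2) \<ge> c^2 * (a*b)"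
    using assms by (intro mult_left_mono) (auto simp: power2_eq_square mult_right_mono)
  have "\<bar>x\<bar> * c * (\<bar>y\<bar> * c) \<le> (a * s) * (b * s)"
    using assms by (rule_tac mult_mono) auto
  hence h2: "c^2 * \<bar>x * y\<bar> \<le> a * b * s^2" by (simp add: abs_mult power2_eq_square algebra_simps)
  have "(\<bar>y\<bar> * c) * (\<bar>y\<bar> * c) \<le> (b * s) * (b * s)"
    using assms by (rule_tac mult_mono) auto
  hence "c^2 * y^2 \<le> b^2 * s^2" by (simp add: power2_eq_square algebra_simps)
  moreover have "b^2 * s^2 \<le> a * b * s^2"
    using assms by (intro mult_right_mono) (auto simp: power2_eq_square mult_right_mono)
  ultimately have h3: "c^2 * y^2 \<le> a * b * s^2" by linarith
  have "- \<bar>x*y\<bar> \<le> x * y" by linarith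
  hence "c^2 * (- \<bar>x*y\<bar>) \<le> c^2 * (x*y)" by (rule mult_left_mono) simp
  hence h5: "c^2 * (x*y) \<ge> - (c^2 * \<bar>x*y\<bar>)" by simp
  have h4: "a * b * (c^2 - 3 * s^2) > 0" using assms a0 by simp
  have "c^2 * (2*a*b - b^2 + 2*x*y - y^2) > 0"
  proof -
    have "c^2 * (2*a*b - b^2 + 2*x*y - y^2) = c^2 * (2*a*b - b^2) + 2 * (c^2 * (x*y)) - c^2 * y^2"
      by (simp add: algebra_simps)
    also have "\<dots> \<ge> c^2 * (a*b) - 2 * (a * b * s^2) - a * b * s^2"
      using h1 h2 h3 h5 by linarith
    finally show ?thesis using h4 by (simp add: algebra_simps)
  qed
  hence "2*a*b - b^2 + 2*x*y - y^2 > 0" using assms by (simp add: zero_less_mult_iff)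
  thus ?thesis by (simp add: power2_eq_square algebra_simps)
qed

lemma min_exists:
  fixes f :: "'a \<Rightarrow> real"
  assumes "finite S" "x \<in> S"
  shows "\<exists>v\<in>S. \<forall>y\<in>S. f v \<le> f y"
proof -
  have "Min (f ` S) \<in> f ` S" using assms by (intro Min_in) auto
  then obtain v where "v \<in> S" "f v = Min (f ` S)" by auto
  thus ?thesis using assms by (metis Min_le finite_imageI image_eqI)
qed

lemma main_claim:
  fixes k :: nat and P :: "complex set" and m :: nat and c s :: real
  assumes k: "k \<ge> 1" and fin: "finite P" and m: "m = 4 * k + 4"
    and cdef: "c = cos (cone_angle m / 2)" and sdef: "s = sin (cone_angle m / 2)"
    and cs: "0 < c" "0 \<le> s" "c^2 > 3 * s^2" "s < c" "c \<le> 1"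
    and thb: "0 < cone_angle m" "cone_angle m \<le> pi / 2"
  shows "card {pr \<in> P \<times> P. cmod (snd pr - fst pr) < cmod (w - u)} = n \<Longrightarrow>
     u \<in> P \<Longrightarrow> w \<in> P \<Longrightarrow> i < m \<Longrightarrow> in_cone m i u w \<Longrightarrow>
     \<exists>ps. is_path (theta_edge m P) ps u w \<and> path_length ps \<le> Nf (rot m i (w - u)) / (c - s)"
proof (induction n arbitrary: u w i rule: less_induct)
  case (less n u w i)
  note IH = less.IH
  let ?E = "theta_edge m P"
  let ?S = "{v \<in> P. in_cone m i u v}"
  let ?f = "\<lambda>v. Re (rot m i (v - u))"
  have "finite ?S" using fin by simp
  moreover have wS: "w \<in> ?S" using less(4,6) by simp
  ultimately obtain v where vS: "v \<in> ?S" and vmin: "\<forall>y\<in>?S. ?f v \<le> ?f y"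
    using min_exists[of ?S w ?f] by blast
  have bp: "bisector_proj m i u x = ?f x" for x
    unfolding bisector_proj_def rot_def by simp
  have edge: "?E u v"
    unfolding theta_edge_def using less(3,5) vS vmin by (auto simp: bp)
  define A where "A = rot m i (w - u)"
  define B where "B = rot m i (v - u)"
  have cfw: "Re A \<ge> cmod (w - u) * c" "\<bar>Im A\<bar> \<le> cmod (w - u) * s"
    using cone_facts[OF less(6) thb] unfolding A_def cdef sdef by auto
  have cfv: "Re B \<ge> cmod (v - u) * c" "\<bar>Im B\<bar> \<le> cmod (v - u) * s"
    using cone_facts[of m i u v] vS thb unfolding B_def cdef sdef by auto
  have BA: "Re B \<le> Re A" using vmin wS unfolding A_def B_def by blast
  have "cmod (w - u) * c \<ge> 0" using cs by simp
  hence ReA0: "Re A \<ge> 0" using cfw by linarith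
  have NfA0: "Nf A \<ge> 0" using ReA0 unfolding Nf_def by simp
  have csp: "c - s > 0" using cs by simp
  show ?case
  proof (cases "v = w")
    case True
    have p: "is_path ?E [u, w] u w" unfolding is_path_def using edge True
      by (auto simp: less_Suc_eq)
    have "cmod (w - u) = cmod A" unfolding A_def by simp
    also have "\<dots> \<le> Nf A" using cmod_le[of A] ReA0 unfolding Nf_def by simp
    also have "\<dots> \<le> Nf A / (c - s)" using NfA0 csp cs
      by (simp add: le_divide_eq mult_left_le)
    finally show ?thesis using p unfolding A_def by (intro exI[of _ "[u, w]"]) auto
  next
    case False
    have vP: "v \<in> P" "in_cone m i u v" using vS by auto
    have vu: "v \<noteq> u" using vP unfolding in_cone_def by auto
    obtain j where j: "j < m" "in_cone m j v w" using cone_exists[of m w v] False m by auto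
    define D where "D = rot m i (w - v)"
    have DAB: "D = A - B" unfolding D_def A_def B_def rot_def by (simp add: algebra_simps)
    have rv: "cmod (v - u) > 0" using vu by simp
    have "cmod (v - u) * c > 0" using rv cs by simp
    hence bpos: "Re B > 0" using cfv by linarith
    have "(Re A - Re B)^2 + (Im A - Im B)^2 < (Re A)^2 + (Im A)^2"
    proof (rule dist_ineq[OF bpos BA _ _ cs(1,2,3)])
      have r: "r \<ge> 0" "r * c \<le> Re A" "\<bar>Im A\<bar> \<le> r * s" if "r = cmod (w - u)" for r
        using cfw that by auto
      have "\<bar>Im A\<bar> * c \<le> (cmod (w - u) * s) * c" using r[OF refl] cs by (intro mult_right_mono) auto
      also have "\<dots> = (cmod (w - u) * c) * s" by simp
      also have "\<dots> \<le> Re A * s" using r[OF refl] cs by (intro mult_right_mono) auto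
      finally show "\<bar>Im A\<bar> * c \<le> Re A * s" .
      have r: "r \<ge> 0" "r * c \<le> Re B" "\<bar>Im B\<bar> \<le> r * s" if "r = cmod (v - u)" for r
        using cfv that by auto
      have "\<bar>Im B\<bar> * c \<le> (cmod (v - u) * s) * c" using r[OF refl] cs by (intro mult_right_mono) auto
      also have "\<dots> = (cmod (v - u) * c) * s" by simp
      also have "\<dots> \<le> Re B * s" using r[OF refl] cs by (intro mult_right_mono) auto
      finally show "\<bar>Im B\<bar> * c \<le> Re B * s" .
    qed
    hence "(cmod D)^2 < (cmod A)^2" unfolding DAB cmod_power2 by simp
    hence dlt: "cmod (w - v) < cmod (w - u)" unfolding D_def A_def
      by (simp add: power_less_imp_less_base)
    let ?T = "\<lambda>a b. {pr \<in> P \<times> P. cmod (snd pr - fst pr) < cmod (b - a)}"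
    have sub: "?T v w \<subset> ?T u w"
    proof
      show "?T v w \<subseteq> ?T u w" using dlt by auto
      have "(v, w) \<in> ?T u w" "(v, w) \<notin> ?T v w" using dlt vP(1) less(4) by auto
      thus "?T v w \<noteq> ?T u w" by blast
    qed
    have lt: "card (?T v w) < n" using psubset_card_mono[OF _ sub] fin less(2) by simp
    have "\<exists>ps. is_path ?E ps v w \<and> path_length ps \<le> Nf (rot m j (w - v)) / (c - s)"
      using IH[OF lt refl vP(1) less(4) j] .
    then obtain ps' where ps': "is_path ?E ps' v w"
        "path_length ps' \<le> Nf (rot m j (w - v)) / (c - s)" by blast
    obtain rest where psr: "ps' = v # rest" using ps'(1) unfolding is_path_def
      by (cases ps') auto
    have path: "is_path ?E (u # ps') u w"
      unfolding is_path_def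
    proof (intro conjI allI impI)
      show "u # ps' \<noteq> []" "hd (u # ps') = u" by auto
      show "last (u # ps') = w" using ps'(1) unfolding is_path_def by auto
      fix jj assume jj: "Suc jj < length (u # ps')"
      show "?E ((u # ps') ! jj) ((u # ps') ! Suc jj) \<or> ?E ((u # ps') ! Suc jj) ((u # ps') ! jj)"
      proof (cases jj)
        case 0 thus ?thesis using edge psr by simp
      next
        case (Suc j') thus ?thesis using ps'(1) jj unfolding is_path_def by auto
      qed
    qed
    have len: "path_length (u # ps') = cmod (v - u) + path_length ps'" using psr by simp
    have "Re D \<ge> 0" using DAB BA by simp
    hence kg: "Nf (rot m j (w - v)) \<le> Nf D"
      unfolding D_def using key_geom[OF m j(2)] by blast
    have "Nf A \<ge> cmod (v - u) * (c - s) + Nf D"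
    proof -
      have e: "Re D = Re A - Re B" "Im D = Im A - Im B" using DAB by simp_all
      have "\<bar>Im D\<bar> \<le> \<bar>Im A\<bar> + \<bar>Im B\<bar>" unfolding e by linarith
      hence "cmod (v - u) * c + Re D + \<bar>Im D\<bar> - cmod (v - u) * s \<le> Nf A"
        using e cfv unfolding Nf_def by linarith
      thus ?thesis unfolding Nf_def by (simp add: algebra_simps)
    qed
    hence "cmod (v - u) * (c - s) + Nf (rot m j (w - v)) \<le> Nf A" using kg by linarith
    hence "(cmod (v - u) * (c - s) + Nf (rot m j (w - v))) / (c - s) \<le> Nf A / (c - s)"
      using csp by (intro divide_right_mono) auto
    moreover have "(cmod (v - u) * (c - s) + Nf (rot m j (w - v))) / (c - s)
        = cmod (v - u) + Nf (rot m j (w - v)) / (c - s)" using csp by (simp add: add_divide_distrib)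
    ultimately have "cmod (v - u) + Nf (rot m j (w - v)) / (c - s) \<le> Nf A / (c - s)" by simp
    hence "path_length (u # ps') \<le> Nf A / (c - s)" using len ps'(2) by linarith
    thus ?thesis using path unfolding A_def by blast
  qed
qed


theorem mainTheorem9:
  fixes k :: nat and P :: "complex set"
  assumes "k \<ge> 1" and "finite P" and "general_position (4 * k + 4) P"
  shows "is_spanner P (theta_edge (4 * k + 4) P)
           (1 + 2 * sin (cone_angle (4 * k + 4) / 2) /
                (cos (cone_angle (4 * k + 4) / 2) - sin (cone_angle (4 * k + 4) / 2)))"
proof -
  define m where "m = 4 * k + 4"
  define c where "c = cos (cone_angle m / 2)"
  define s where "s = sin (cone_angle m / 2)"
  have m8: "real m \<ge> 8" unfolding m_def using assms(1) by simp
  have th0: "cone_angle m > 0" unfolding cone_angle_def using m8 by simp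
  have "cone_angle m \<le> pi / 4" unfolding cone_angle_def using m8 pi_gt_zero
    by (simp add: divide_simps)
  hence thb: "cone_angle m \<le> pi / 2" and th6: "cone_angle m / 2 < pi / 6" using pi_gt_zero by linarith+
  have s0: "s > 0" unfolding s_def using th0 th6 pi_gt_zero by (intro sin_gt_zero) linarith+
  have s1: "s < 1/2" unfolding s_def using th0 th6 sin_monotone_2pi[of "cone_angle m / 2" "pi/6"] sin_30
    pi_gt_zero by linarith
  have c0: "c > 0" unfolding c_def using th0 th6 pi_gt_zero by (intro cos_gt_zero_pi) linarith+
  have cs1: "c^2 + s^2 = 1" unfolding c_def s_def by (simp add: sin_cos_squared_add add.commute)
  have "s * s < (1/2) * (1/2)" using s0 s1 by (intro mult_strict_mono) auto
  hence "s^2 < 1/4" by (simp add: power2_eq_square)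
  hence c3: "c^2 > 3 * s^2" using cs1 by linarith
  hence "s^2 < c^2" using zero_le_power2[of s] by linarith
  hence sc: "s < c" using c0 by (intro power_less_imp_less_base[of s 2 c]) auto
  have c1: "c \<le> 1" unfolding c_def by simp
  have K: "1 + 2 * s / (c - s) = (c + s) / (c - s)" using sc by (simp add: field_simps)
  have "is_spanner P (theta_edge m P) (1 + 2 * s / (c - s))"
    unfolding is_spanner_def
  proof (intro ballI)
    fix u w assume u: "u \<in> P" and w: "w \<in> P"
    show "\<exists>ps. is_path (theta_edge m P) ps u w \<and> path_length ps \<le> (1 + 2 * s / (c - s)) * cmod (w - u)"
    proof (cases "u = w")
      case True
      thus ?thesis by (intro exI[of _ "[u]"]) (simp add: is_path_def)
    next
      case False
      obtain i where i: "i < m" "in_cone m i u w" using cone_exists[of m w u] False m_def by auto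
      obtain ps where ps: "is_path (theta_edge m P) ps u w" "path_length ps \<le> Nf (rot m i (w - u)) / (c - s)"
        using main_claim[OF assms(1,2) m_def c_def s_def c0 less_imp_le[OF s0] c3 sc c1 th0 thb refl u w i]
        by blast
      have "Nf (rot m i (w - u)) \<le> cmod (w - u) * (c + s)"
        using cone_facts(3)[OF i(2) th0 thb] unfolding c_def s_def by simp
      hence "Nf (rot m i (w - u)) / (c - s) \<le> cmod (w - u) * (c + s) / (c - s)"
        using sc by (intro divide_right_mono) auto
      also have "\<dots> = (1 + 2 * s / (c - s)) * cmod (w - u)" unfolding K by simp
      finally show ?thesis using ps by (intro exI[of _ ps]) auto
    qed
  qed
  thus ?thesis unfolding m_def c_def s_def .
qed

end
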